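(* For every formula $\varphi$ containing no occurrence of $\mathbf{GF}$ or $\mathbf{FG}$, each of $\mathbf{GF}\varphi$ and $\mathbf{FG}\varphi$ is equivalent to a formula in normal form with at most $3^{|\varphi|}\cdot|\varphi|$ nodes.
   Context: Fix a finite set $Ap$ of atomic propositions. A word is an infinite sequence $w = w[0]w[1]\dots$ of letters of $2^{Ap}$, and $w_i$ denotes the suffix $w[i]w[i+1]\dots$. Formulas are generated by $\varphi ::= \mathbf{true} \mid \mathbf{false} \mid a \mid \neg a \mid \varphi\wedge\varphi \mid \varphi\vee\varphi \mid \mathbf{X}\varphi \mid \varphi\,\mathbf{U}\,\varphi \mid \varphi\,\mathbf{W}\,\varphi \mid \mathbf{GF}\varphi \mid \mathbf{FG}\varphi$ ($a\in Ap$), where $\mathbf{GF}$, $\mathbf{FG}$ are single unary operators (limit operators). Semantics: $w\models a$ iff $a\in w[0]$, $w\models\neg a$ iff $a\notin w[0]$, Boolean constants and connectives as usual; $w\models\mathbf{X}\varphi$ iff $w_1\models\varphi$; $w\models\varphi\mathbf{U}\psi$ iff $\exists k$: $w_k\models\psi$ and $\forall j<k$: $w_j\models\varphi$; $w\models\varphi\mathbf{W}\psi$ iff ($\forall k$: $w_k\models\varphi$) or $w\models\varphi\mathbf{U}\psi$; $w\models\mathbf{GF}\varphi$ iff $w_k\models\varphi$ for infinitely many $k$; $w\models\mathbf{FG}\varphi$ iff $\exists n\,\forall k\geq n$: $w_k\models\varphi$. Two formulas are equivalent if satisfied by the same words. The syntax tree $T_\varphi$ has leaves $\mathbf{true},\mathbf{false},a,\neg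 a$ and one internal node per operator occurrence; $|\varphi|$ is its number of nodes. $\mathbf{U}$-, $\mathbf{W}$-, $\mathbf{X}$-, $\mathbf{GF}$-, $\mathbf{FG}$-nodes are nodes whose subformula has that top operator; $\mathbf{GF}$- and $\mathbf{FG}$-nodes are limit nodes; all five kinds are temporal nodes. A node is under another if it is a proper descendant of it. A formula is in normal form if (1) no $\mathbf{U}$-node is under a $\mathbf{W}$-node; (2) no limit node is under another temporal node; (3) no $\mathbf{W}$-node is under a $\mathbf{GF}$-node and no $\mathbf{U}$-node is under an $\mathbf{FG}$-node. *)

theory Defs
  imports Main
begin

datatype 'a ltl =
    LTrue | LFalse | Prop 'a | NProp 'a
  | And "'a ltl" "'a ltl" | Or "'a ltl" "'a ltl"
  | Next "'a ltl" | Until "'a ltl" "'a ltl" | WUntil "'a ltl" "'a ltl"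
  | GF "'a ltl" | FG "'a ltl"

type_synonym 'a word = "nat \<Rightarrow> 'a set"

definition suffix :: "nat \<Rightarrow> 'a word \<Rightarrow> 'a word" where
  "suffix i w = (\<lambda>n. w (n + i))"

fun sat :: "'a word \<Rightarrow> 'a ltl \<Rightarrow> bool" where
  "sat w LTrue = True"
| "sat w LFalse = False"
| "sat w (Prop a) = (a \<in> w 0)"
| "sat w (NProp a) = (a \<notin> w 0)"
| "sat w (And p q) = (sat w p \<and> sat w q)"
| "sat w (Or p q) = (sat w p \<or> sat w q)"
| "sat w (Next p) = sat (suffix 1 w) p"
| "sat w (Until p q) = (\<exists>k. sat (suffix k w) q \<and> (\<forall>j<k. sat (suffix j w) p))"
| "sat w (WUntil p q) = ((\<forall>k. sat (suffix k w) p) \<or>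
     (\<exists>k. sat (suffix k w) q \<and> (\<forall>j<k. sat (suffix j w) p)))"
| "sat w (GF p) = infinite {k. sat (suffix k w) p}"
| "sat w (FG p) = (\<exists>n. \<forall>k\<ge>n. sat (suffix k w) p)"

definition ltl_equiv :: "'a ltl \<Rightarrow> 'a ltl \<Rightarrow> bool" where
  "ltl_equiv p q = (\<forall>w. sat w p = sat w q)"

fun fsize :: "'a ltl \<Rightarrow> nat" where
  "fsize LTrue = 1" | "fsize LFalse = 1" | "fsize (Prop a) = 1" | "fsize (NProp a) = 1"
| "fsize (And p q) = fsize p + fsize q + 1"
| "fsize (Or p q) = fsize p + fsize q + 1"
| "fsize (Next p) = fsize p + 1"
| "fsize (Until p q) = fsize p + fsize q + 1"
| "fsize (WUntil p q) = fsize p + fsize q + 1"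
| "fsize (GF p) = fsize p + 1"
| "fsize (FG p) = fsize p + 1"

fun subfs :: "'a ltl \<Rightarrow> 'a ltl set" where
  "subfs (And p q) = insert (And p q) (subfs p \<union> subfs q)"
| "subfs (Or p q) = insert (Or p q) (subfs p \<union> subfs q)"
| "subfs (Next p) = insert (Next p) (subfs p)"
| "subfs (Until p q) = insert (Until p q) (subfs p \<union> subfs q)"
| "subfs (WUntil p q) = insert (WUntil p q) (subfs p \<union> subfs q)"
| "subfs (GF p) = insert (GF p) (subfs p)"
| "subfs (FG p) = insert (FG p) (subfs p)"
| "subfs p = {p}"

fun psubfs :: "'a ltl \<Rightarrow> 'a ltl set" where
  "psubfs (And p q) = subfs p \<union> subfs q"
| "psubfs (Or p q) = subfs p \<union> subfs q"
| "psubfs (Next p) = subfs p"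
| "psubfs (Until p q) = subfs p \<union> subfs q"
| "psubfs (WUntil p q) = subfs p \<union> subfs q"
| "psubfs (GF p) = subfs p"
| "psubfs (FG p) = subfs p"
| "psubfs p = {}"

fun is_until :: "'a ltl \<Rightarrow> bool" where
  "is_until (Until _ _) = True" | "is_until _ = False"
fun is_wuntil :: "'a ltl \<Rightarrow> bool" where
  "is_wuntil (WUntil _ _) = True" | "is_wuntil _ = False"
fun is_limit :: "'a ltl \<Rightarrow> bool" where
  "is_limit (GF _) = True" | "is_limit (FG _) = True" | "is_limit _ = False"
fun is_temporal :: "'a ltl \<Rightarrow> bool" where
  "is_temporal (Next _) = True" | "is_temporal (Until _ _) = True"
| "is_temporal (WUntil _ _) = True" | "is_temporal (GF _) = True"
| "is_temporal (FG _) = True" | "is_temporal _ = False"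
fun is_GF :: "'a ltl \<Rightarrow> bool" where
  "is_GF (GF _) = True" | "is_GF _ = False"
fun is_FG :: "'a ltl \<Rightarrow> bool" where
  "is_FG (FG _) = True" | "is_FG _ = False"

text \<open>A node ps is under a node p iff ps occurs in psubfs p (for some occurrence of p).\<close>
definition normal_form :: "'a ltl \<Rightarrow> bool" where
  "normal_form \<phi> \<longleftrightarrow>
     (\<forall>p\<in>subfs \<phi>. is_wuntil p \<longrightarrow> (\<forall>q\<in>psubfs p. \<not> is_until q)) \<and>
     (\<forall>p\<in>subfs \<phi>. is_temporal p \<longrightarrow> (\<forall>q\<in>psubfs p. \<not> is_limit q)) \<and>
     (\<forall>p\<in>subfs \<phi>. is_GF p \<longrightarrow> (\<forall>q\<in>psubfs p. \<not> is_wuntil q)) \<and>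
     (\<forall>p\<in>subfs \<phi>. is_FG p \<longrightarrow> (\<forall>q\<in>psubfs p. \<not> is_until q))"

definition limit_free :: "'a ltl \<Rightarrow> bool" where
  "limit_free \<phi> \<longleftrightarrow> (\<forall>p\<in>subfs \<phi>. \<not> is_limit p)"

end

theory Submission
  imports Defs
begin


lemma suffix_suffix[simp]: "suffix k (suffix j w) = suffix (j + k) w"
  by (simp add: suffix_def ac_simps)

definition evimp :: "'a word \<Rightarrow> 'a ltl \<Rightarrow> 'a ltl \<Rightarrow> bool" where
  "evimp w p q \<longleftrightarrow> (\<exists>N. \<forall>k\<ge>N. sat (suffix k w) p \<longrightarrow> sat (suffix k w) q)"

lemma evimp_refl: "evimp w p p" by (auto simp: evimp_def)

lemma evimp_trans: "evimp w p q \<Longrightarrow> evimp w q r \<Longrightarrow> evimp w p r"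
  unfolding evimp_def
proof (elim exE)
  fix N1 N2 assume 1: "\<forall>k\<ge>N1. sat (suffix k w) p \<longrightarrow> sat (suffix k w) q"
    and 2: "\<forall>k\<ge>N2. sat (suffix k w) q \<longrightarrow> sat (suffix k w) r"
  show "\<exists>N. \<forall>k\<ge>N. sat (suffix k w) p \<longrightarrow> sat (suffix k w) r"
    using 1 2 by (intro exI[of _ "max N1 N2"]) auto
qed

lemma evimp_pw: "evimp w p q \<Longrightarrow> (\<And>w'. sat w' q \<Longrightarrow> sat w' r) \<Longrightarrow> evimp w p r"
  unfolding evimp_def by blast

lemma evimp_Next: "evimp w p q \<Longrightarrow> evimp w (Next p) (Next q)"
  unfolding evimp_def
proof (elim exE)
  fix N assume 1: "\<forall>k\<ge>N. sat (suffix k w) p \<longrightarrow> sat (suffix k w) q"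
  show "\<exists>N. \<forall>k\<ge>N. sat (suffix k w) (Next p) \<longrightarrow> sat (suffix k w) (Next q)"
    using 1 by (intro exI[of _ N]) auto
qed

lemma evimp_And: "evimp w a c \<Longrightarrow> evimp w b d \<Longrightarrow> evimp w (And a b) (And c d)"
  unfolding evimp_def
proof (elim exE)
  fix N1 N2 assume 1: "\<forall>k\<ge>N1. sat (suffix k w) a \<longrightarrow> sat (suffix k w) c"
    and 2: "\<forall>k\<ge>N2. sat (suffix k w) b \<longrightarrow> sat (suffix k w) d"
  show "\<exists>N. \<forall>k\<ge>N. sat (suffix k w) (And a b) \<longrightarrow> sat (suffix k w) (And c d)"
    using 1 2 by (intro exI[of _ "max N1 N2"]) auto
qed

lemma evimp_Or: "evimp w a c \<Longrightarrow> evimp w b d \<Longrightarrow> evimp w (Or a b) (Or c d)"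
  unfolding evimp_def
proof (elim exE)
  fix N1 N2 assume 1: "\<forall>k\<ge>N1. sat (suffix k w) a \<longrightarrow> sat (suffix k w) c"
    and 2: "\<forall>k\<ge>N2. sat (suffix k w) b \<longrightarrow> sat (suffix k w) d"
  show "\<exists>N. \<forall>k\<ge>N. sat (suffix k w) (Or a b) \<longrightarrow> sat (suffix k w) (Or c d)"
    using 1 2 by (intro exI[of _ "max N1 N2"]) auto
qed

lemma evimp_Until: "evimp w a c \<Longrightarrow> evimp w b d \<Longrightarrow> evimp w (Until a b) (Until c d)"
proof -
  assume "evimp w a c" "evimp w b d"
  then obtain N1 N2 where 1: "\<forall>k\<ge>N1. sat (suffix k w) a \<longrightarrow> sat (suffix k w) c"
    and 2: "\<forall>k\<ge>N2. sat (suffix k w) b \<longrightarrow> sat (suffix k w) d" unfolding evimp_def by blast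
  show ?thesis unfolding evimp_def
  proof (intro exI[of _ "max N1 N2"] allI impI)
    fix k assume k: "max N1 N2 \<le> k" and "sat (suffix k w) (Until a b)"
    then obtain i where "sat (suffix (k+i) w) b" "\<forall>j<i. sat (suffix (k+j) w) a" by auto
    then show "sat (suffix k w) (Until c d)" using 1 2 k
      by (auto intro!: exI[of _ i])
  qed
qed

lemma evimp_WUntil: "evimp w a c \<Longrightarrow> evimp w b d \<Longrightarrow> evimp w (WUntil a b) (WUntil c d)"
proof -
  assume "evimp w a c" "evimp w b d"
  then obtain N1 N2 where 1: "\<forall>k\<ge>N1. sat (suffix k w) a \<longrightarrow> sat (suffix k w) c"
    and 2: "\<forall>k\<ge>N2. sat (suffix k w) b \<longrightarrow> sat (suffix k w) d" unfolding evimp_def by blast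
  show ?thesis unfolding evimp_def
  proof (intro exI[of _ "max N1 N2"] allI impI)
    fix k assume k: "max N1 N2 \<le> k" and s: "sat (suffix k w) (WUntil a b)"
    show "sat (suffix k w) (WUntil c d)"
    proof (cases "\<forall>i. sat (suffix (k+i) w) a")
      case True then show ?thesis using 1 k by auto
    next
      case False
      then obtain i where "sat (suffix (k+i) w) b" "\<forall>j<i. sat (suffix (k+j) w) a" using s by auto
      then show ?thesis using 1 2 k by (auto intro!: exI[of _ i])
    qed
  qed
qed

lemma evimp_GF: "evimp w p q \<Longrightarrow> sat w (GF p) \<Longrightarrow> sat w (GF q)"
proof -
  assume "evimp w p q" and inf: "sat w (GF p)"
  then obtain N where N: "\<forall>k\<ge>N. sat (suffix k w) p \<longrightarrow> sat (suffix k w) q" unfolding evimp_def by blast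
  have "{k. sat (suffix k w) p} \<subseteq> {k. sat (suffix k w) q} \<union> {..<N}" using N by auto
  then show ?thesis using inf by (auto dest: finite_subset)
qed

lemma evimp_FG: "evimp w p q \<Longrightarrow> sat w (FG p) \<Longrightarrow> sat w (FG q)"
  unfolding evimp_def
proof (elim exE)
  fix N assume 1: "\<forall>k\<ge>N. sat (suffix k w) p \<longrightarrow> sat (suffix k w) q"
  assume "sat w (FG p)"
  then obtain n where n: "\<forall>k\<ge>n. sat (suffix k w) p" by auto
  show "sat w (FG q)" using 1 n by (auto intro!: exI[of _ "max N n"])
qed

lemma U_imp_W: "sat w (Until a b) \<Longrightarrow> sat w (WUntil a b)" by auto

lemma W_imp_U_notFG: "\<not> sat w (FG a) \<Longrightarrow> evimp w (WUntil a b) (Until a b)"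
proof -
  assume nfg: "\<not> sat w (FG a)"
  show ?thesis unfolding evimp_def
  proof (intro exI[of _ 0] allI impI)
    fix k assume "sat (suffix k w) (WUntil a b)"
    moreover have "\<not> (\<forall>i. sat (suffix (k+i) w) a)"
    proof
      assume "\<forall>i. sat (suffix (k+i) w) a"
      then have "\<forall>j\<ge>k. sat (suffix j w) a" by (metis le_add_diff_inverse)
      then show False using nfg by auto
    qed
    ultimately show "sat (suffix k w) (Until a b)" by auto
  qed
qed

lemma W_imp_U_GF: "sat w (GF b) \<Longrightarrow> sat (suffix k w) (WUntil a b) \<Longrightarrow> sat (suffix k w) (Until a b)"
proof -
  assume inf: "sat w (GF b)" and s: "sat (suffix k w) (WUntil a b)"
  have "infinite {j. sat (suffix j w) b}" using inf by simp
  then obtain j where j: "j \<ge> k" "sat (suffix j w) b"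
    by (metis (mono_tags, lifting) finite_nat_set_iff_bounded_le le_cases mem_Collect_eq)
  show ?thesis
  proof (cases "\<forall>i. sat (suffix (k+i) w) a")
    case True
    then show ?thesis using j by (auto intro!: exI[of _ "j - k"])
  next
    case False then show ?thesis using s by auto
  qed
qed

lemma notGF_U: "\<not> sat w (GF b) \<Longrightarrow> evimp w (Until a b) LFalse"
proof -
  assume "\<not> sat w (GF b)"
  then have "finite {j. sat (suffix j w) b}" by simp
  then obtain N where N: "\<forall>j\<ge>N. \<not> sat (suffix j w) b"
    by (metis (mono_tags, lifting) finite_nat_set_iff_bounded_le mem_Collect_eq not_less_eq_eq)
  show ?thesis unfolding evimp_def
    using N by (auto intro!: exI[of _ N])
qed

lemma FG_W: "sat w (FG a) \<Longrightarrow> evimp w LTrue (WUntil a b)"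
proof -
  assume "sat w (FG a)"
  then obtain n where n: "\<forall>k\<ge>n. sat (suffix k w) a" by auto
  show ?thesis unfolding evimp_def using n by (auto intro!: exI[of _ n])
qed


type_synonym 'a cas = "'a ltl list \<times> 'a ltl"

definition allsat :: "'a word \<Rightarrow> 'a ltl list \<Rightarrow> bool" where
  "allsat w cs \<longleftrightarrow> (\<forall>c\<in>set cs. sat w c)"

lemma allsat_simps[simp]: "allsat w [] = True" "allsat w (xs @ ys) = (allsat w xs \<and> allsat w ys)"
  "allsat w (x # xs) = (sat w x \<and> allsat w xs)"
  by (auto simp: allsat_def)

definition good :: "'a cas list \<Rightarrow> 'a ltl \<Rightarrow> bool" where
  "good D \<phi> \<longleftrightarrow> (\<forall>w. (\<forall>d\<in>set D. allsat w (fst d) \<longrightarrow> evimp w (snd d) \<phi>) \<and>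
                      (\<exists>d\<in>set D. allsat w (fst d) \<and> evimp w \<phi> (snd d)))"

definition prodc :: "('a ltl \<Rightarrow> 'a ltl \<Rightarrow> 'a ltl) \<Rightarrow> 'a cas list \<Rightarrow> 'a cas list \<Rightarrow> 'a cas list" where
  "prodc f D1 D2 = concat (map (\<lambda>d1. map (\<lambda>d2. (fst d1 @ fst d2, f (snd d1) (snd d2))) D2) D1)"

definition nuU :: "('a ltl \<Rightarrow> 'a ltl) \<Rightarrow> 'a cas list \<Rightarrow> 'a cas list \<Rightarrow> 'a cas list" where
  "nuU g D1 D2 = concat (map (\<lambda>d1. map (\<lambda>d2. (fst d1 @ fst d2 @ [g (snd d2)], WUntil (snd d1) (snd d2))) D2) D1)
     @ [([], LFalse)]"

definition muW :: "('a ltl \<Rightarrow> 'a ltl) \<Rightarrow> 'a cas list \<Rightarrow> 'a cas list \<Rightarrow> 'a cas list" where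
  "muW h D1 D2 = prodc Until D1 D2 @ map (\<lambda>d1. (fst d1 @ [h (snd d1)], LTrue)) D1"

lemma set_prodc: "d \<in> set (prodc f D1 D2) \<longleftrightarrow> (\<exists>d1\<in>set D1. \<exists>d2\<in>set D2. d = (fst d1 @ fst d2, f (snd d1) (snd d2)))"
  by (auto simp: prodc_def)

lemma set_nuU: "d \<in> set (nuU g D1 D2) \<longleftrightarrow> d = ([], LFalse) \<or>
   (\<exists>d1\<in>set D1. \<exists>d2\<in>set D2. d = (fst d1 @ fst d2 @ [g (snd d2)], WUntil (snd d1) (snd d2)))"
  by (auto simp: nuU_def)

lemma set_muW: "d \<in> set (muW h D1 D2) \<longleftrightarrow> d \<in> set (prodc Until D1 D2) \<or>
   (\<exists>d1\<in>set D1. d = (fst d1 @ [h (snd d1)], LTrue))"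
  by (auto simp: muW_def)

lemma length_cm: "length (concat (map (\<lambda>d1. map (f d1) D2) D1)) = length D1 * length D2"
  by (induction D1) auto

lemma length_prodc: "length (prodc f D1 D2) = length D1 * length D2"
  by (simp add: prodc_def length_cm)
lemma length_nuU: "length (nuU g D1 D2) = length D1 * length D2 + 1"
  by (simp add: nuU_def length_cm)
lemma length_muW: "length (muW h D1 D2) = length D1 * length D2 + length D1"
  by (simp add: muW_def length_prodc)

fun gdec :: "('a ltl \<Rightarrow> 'a ltl \<Rightarrow> 'a ltl) \<Rightarrow> ('a ltl \<Rightarrow> 'a ltl \<Rightarrow> 'a ltl) \<Rightarrow> bool \<Rightarrow> 'a ltl \<Rightarrow> 'a cas list" where
  "gdec g h m LTrue = [([], LTrue)]"
| "gdec g h m LFalse = [([], LFalse)]"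
| "gdec g h m (Prop a) = [([], Prop a)]"
| "gdec g h m (NProp a) = [([], NProp a)]"
| "gdec g h m (GF p) = [([], GF p)]"
| "gdec g h m (FG p) = [([], FG p)]"
| "gdec g h m (Next p) = map (\<lambda>d. (fst d, Next (snd d))) (gdec g h m p)"
| "gdec g h m (And p q) = prodc And (gdec g h m p) (gdec g h m q)"
| "gdec g h m (Or p q) = prodc Or (gdec g h m p) (gdec g h m q)"
| "gdec g h m (Until p q) = (if m then prodc Until (gdec g h m p) (gdec g h m q)
                             else nuU (g q) (gdec g h m p) (gdec g h m q))"
| "gdec g h m (WUntil p q) = (if m then muW (h p) (gdec g h m p) (gdec g h m q)
                             else prodc WUntil (gdec g h m p) (gdec g h m q))"

fun bigOr :: "'a ltl list \<Rightarrow> 'a ltl" where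
  "bigOr [] = LFalse"
| "bigOr [x] = x"
| "bigOr (x # y # xs) = Or x (bigOr (y # xs))"

definition mkGF :: "'a cas \<Rightarrow> 'a ltl" where "mkGF d = foldr And (fst d) (GF (snd d))"
definition mkFG :: "'a cas \<Rightarrow> 'a ltl" where "mkFG d = foldr And (fst d) (FG (snd d))"
definition nfG :: "'a cas list \<Rightarrow> 'a ltl" where "nfG D = bigOr (map mkGF D)"
definition nfF :: "'a cas list \<Rightarrow> 'a ltl" where "nfF D = bigOr (map mkFG D)"

lemma sat_bigOr: "sat w (bigOr xs) \<longleftrightarrow> (\<exists>x\<in>set xs. sat w x)"
  by (induction xs rule: bigOr.induct) auto

lemma sat_foldr_And: "sat w (foldr And cs x) \<longleftrightarrow> allsat w cs \<and> sat w x"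
  by (induction cs) auto

lemma sat_nfG: "sat w (nfG D) \<longleftrightarrow> (\<exists>d\<in>set D. allsat w (fst d) \<and> sat w (GF (snd d)))"
  unfolding nfG_def sat_bigOr mkGF_def by (simp add: sat_foldr_And del: sat.simps)

lemma sat_nfF: "sat w (nfF D) \<longleftrightarrow> (\<exists>d\<in>set D. allsat w (fst d) \<and> sat w (FG (snd d)))"
  unfolding nfF_def sat_bigOr mkFG_def by (simp add: sat_foldr_And del: sat.simps)

lemma good_nfG: "good D \<phi> \<Longrightarrow> sat w (nfG D) \<longleftrightarrow> sat w (GF \<phi>)"
  unfolding sat_nfG good_def by (meson evimp_GF)

lemma good_nfF: "good D \<phi> \<Longrightarrow> sat w (nfF D) \<longleftrightarrow> sat w (FG \<phi>)"
  unfolding sat_nfF good_def by (meson evimp_FG)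

lemma good_single: "good [([], \<phi>)] \<phi>"
  by (simp add: good_def evimp_refl)

lemma good_Next: "good D p \<Longrightarrow> good (map (\<lambda>d. (fst d, Next (snd d))) D) (Next p)"
  unfolding good_def by (fastforce intro: evimp_Next)

lemma good_prodc:
  assumes "good D1 p" "good D2 q"
    and mono: "\<And>w a b c d. evimp w a c \<Longrightarrow> evimp w b d \<Longrightarrow> evimp w (f a b) (f c d)"
  shows "good (prodc f D1 D2) (f p q)"
  unfolding good_def
proof (intro allI conjI)
  fix w
  show "\<forall>d\<in>set (prodc f D1 D2). allsat w (fst d) \<longrightarrow> evimp w (snd d) (f p q)"
  proof
    fix d assume "d \<in> set (prodc f D1 D2)"
    then obtain d1 d2 where d: "d1 \<in> set D1" "d2 \<in> set D2" "d = (fst d1 @ fst d2, f (snd d1) (snd d2))"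
      unfolding set_prodc by blast
    show "allsat w (fst d) \<longrightarrow> evimp w (snd d) (f p q)"
      using assms(1,2) d unfolding good_def by (auto intro!: mono)
  qed
  obtain d1 d2 where "d1 \<in> set D1" "allsat w (fst d1)" "evimp w p (snd d1)"
    "d2 \<in> set D2" "allsat w (fst d2)" "evimp w q (snd d2)"
    using assms(1,2) unfolding good_def by blast
  then show "\<exists>d\<in>set (prodc f D1 D2). allsat w (fst d) \<and> evimp w (f p q) (snd d)"
    by (intro bexI[of _ "(fst d1 @ fst d2, f (snd d1) (snd d2))"]) (auto simp: set_prodc intro!: mono)
qed


lemma evimp_LFalse: "evimp w LFalse p" by (auto simp: evimp_def)
lemma evimp_LTrue: "evimp w p LTrue" by (auto simp: evimp_def)

lemma evimp_GF_WU: "sat w (GF b) \<Longrightarrow> evimp w (WUntil a b) (Until a b)"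
  unfolding evimp_def using W_imp_U_GF by blast

lemma good_nuU:
  assumes gp: "good D1 p" and gq: "good D2 q"
    and g1: "\<And>w d. d \<in> set D2 \<Longrightarrow> allsat w (fst d) \<Longrightarrow> sat w (G (snd d)) \<Longrightarrow> sat w (GF q)"
    and g2: "\<And>w d. d \<in> set D2 \<Longrightarrow> allsat w (fst d) \<Longrightarrow> evimp w q (snd d) \<Longrightarrow> sat w (GF q) \<Longrightarrow> sat w (G (snd d))"
  shows "good (nuU G D1 D2) (Until p q)"
  unfolding good_def
proof (intro allI conjI)
  fix w
  show "\<forall>d\<in>set (nuU G D1 D2). allsat w (fst d) \<longrightarrow> evimp w (snd d) (Until p q)"
  proof (intro ballI impI)
    fix d assume d: "d \<in> set (nuU G D1 D2)" and a: "allsat w (fst d)"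
    show "evimp w (snd d) (Until p q)"
    proof (cases "d = ([], LFalse)")
      case True then show ?thesis by (simp add: evimp_LFalse)
    next
      case False
      then obtain d1 d2 where d12: "d1 \<in> set D1" "d2 \<in> set D2"
        "d = (fst d1 @ fst d2 @ [G (snd d2)], WUntil (snd d1) (snd d2))"
        using d unfolding set_nuU by blast
      then have a1: "allsat w (fst d1)" and a2: "allsat w (fst d2)" and a3: "sat w (G (snd d2))" using a by auto
      have e1: "evimp w (snd d1) p" using gp d12 a1 unfolding good_def by blast
      have e2: "evimp w (snd d2) q" using gq d12 a2 unfolding good_def by blast
      have "sat w (GF q)" using g1 d12 a2 a3 by blast
      then have "evimp w (WUntil p q) (Until p q)" by (rule evimp_GF_WU)
      then show ?thesis using evimp_WUntil[OF e1 e2] d12 evimp_trans by auto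
    qed
  qed
  show "\<exists>d\<in>set (nuU G D1 D2). allsat w (fst d) \<and> evimp w (Until p q) (snd d)"
  proof (cases "sat w (GF q)")
    case True
    obtain d1 d2 where d: "d1 \<in> set D1" "allsat w (fst d1)" "evimp w p (snd d1)"
      "d2 \<in> set D2" "allsat w (fst d2)" "evimp w q (snd d2)"
      using gp gq unfolding good_def by blast
    have "sat w (G (snd d2))" using g2 d True by blast
    moreover have "evimp w (Until p q) (WUntil (snd d1) (snd d2))"
      using evimp_pw[OF evimp_Until[OF d(3) d(6)] U_imp_W] .
    ultimately show ?thesis using d
      by (intro bexI[of _ "(fst d1 @ fst d2 @ [G (snd d2)], WUntil (snd d1) (snd d2))"]) (auto simp: set_nuU)
  next
    case False
    then show ?thesis using notGF_U[OF False] by (intro bexI[of _ "([], LFalse)"]) (auto simp: set_nuU)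
  qed
qed

lemma good_muW:
  assumes gp: "good D1 p" and gq: "good D2 q"
    and h1: "\<And>w d. d \<in> set D1 \<Longrightarrow> allsat w (fst d) \<Longrightarrow> sat w (H (snd d)) \<Longrightarrow> sat w (FG p)"
    and h2: "\<And>w d. d \<in> set D1 \<Longrightarrow> allsat w (fst d) \<Longrightarrow> evimp w p (snd d) \<Longrightarrow> sat w (FG p) \<Longrightarrow> sat w (H (snd d))"
  shows "good (muW H D1 D2) (WUntil p q)"
  unfolding good_def
proof (intro allI conjI)
  fix w
  have gu: "good (prodc Until D1 D2) (Until p q)" using good_prodc[OF gp gq evimp_Until] .
  show "\<forall>d\<in>set (muW H D1 D2). allsat w (fst d) \<longrightarrow> evimp w (snd d) (WUntil p q)"
  proof (intro ballI impI)
    fix d assume d: "d \<in> set (muW H D1 D2)" and a: "allsat w (fst d)"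
    show "evimp w (snd d) (WUntil p q)"
    proof (cases "d \<in> set (prodc Until D1 D2)")
      case True
      then have "evimp w (snd d) (Until p q)" using gu a unfolding good_def by blast
      then show ?thesis using evimp_pw U_imp_W by blast
    next
      case False
      then obtain d1 where d1: "d1 \<in> set D1" "d = (fst d1 @ [H (snd d1)], LTrue)"
        using d unfolding set_muW by blast
      then have "sat w (FG p)" using h1 a by auto
      then show ?thesis using d1 FG_W by auto
    qed
  qed
  show "\<exists>d\<in>set (muW H D1 D2). allsat w (fst d) \<and> evimp w (WUntil p q) (snd d)"
  proof (cases "sat w (FG p)")
    case True
    obtain d1 where d: "d1 \<in> set D1" "allsat w (fst d1)" "evimp w p (snd d1)"
      using gp unfolding good_def by blast
    have "sat w (H (snd d1))" using h2 d True by blast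
    then show ?thesis using d
      by (intro bexI[of _ "(fst d1 @ [H (snd d1)], LTrue)"]) (auto simp: set_muW evimp_LTrue)
  next
    case False
    obtain d where d: "d \<in> set (prodc Until D1 D2)" "allsat w (fst d)" "evimp w (Until p q) (snd d)"
      using gu unfolding good_def by blast
    then show ?thesis using evimp_trans[OF W_imp_U_notFG[OF False]]
      by (intro bexI[of _ d]) (auto simp: set_muW)
  qed
qed

definition gok :: "('a ltl \<Rightarrow> 'a ltl \<Rightarrow> 'a ltl) \<Rightarrow> bool" where
  "gok g \<longleftrightarrow> (\<forall>q D w d. good D q \<longrightarrow> d \<in> set D \<longrightarrow> allsat w (fst d) \<longrightarrow>
      (sat w (g q (snd d)) \<longrightarrow> sat w (GF q)) \<and> (evimp w q (snd d) \<longrightarrow> sat w (GF q) \<longrightarrow> sat w (g q (snd d))))"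

definition hok :: "('a ltl \<Rightarrow> 'a ltl \<Rightarrow> 'a ltl) \<Rightarrow> bool" where
  "hok h \<longleftrightarrow> (\<forall>p D w d. good D p \<longrightarrow> d \<in> set D \<longrightarrow> allsat w (fst d) \<longrightarrow>
      (sat w (h p (snd d)) \<longrightarrow> sat w (FG p)) \<and> (evimp w p (snd d) \<longrightarrow> sat w (FG p) \<longrightarrow> sat w (h p (snd d))))"

lemma gdec_good: "gok g \<Longrightarrow> hok h \<Longrightarrow> good (gdec g h m \<phi>) \<phi>"
proof (induction \<phi>)
  case (Next p) then show ?case by (simp add: good_Next)
next
  case (And p q) then show ?case by (simp add: good_prodc evimp_And)
next
  case (Or p q) then show ?case by (simp add: good_prodc evimp_Or)
next
  case (Until p q)
  show ?case
  proof (cases m)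
    case True then show ?thesis using Until by (simp add: good_prodc evimp_Until)
  next
    case False
    have gp: "good (gdec g h m p) p" and gq: "good (gdec g h m q) q" using Until by auto
    have e: "gdec g h m (Until p q) = nuU (g q) (gdec g h m p) (gdec g h m q)" using False by simp
    show ?thesis unfolding e
      by (rule good_nuU[OF gp gq]) (insert Until.prems gq, unfold gok_def, blast+)
  qed
next
  case (WUntil p q)
  show ?case
  proof (cases m)
    case False then show ?thesis using WUntil by (simp add: good_prodc evimp_WUntil)
  next
    case True
    have gp: "good (gdec g h m p) p" and gq: "good (gdec g h m q) q" using WUntil by auto
    have e: "gdec g h m (WUntil p q) = muW (h p) (gdec g h m p) (gdec g h m q)" using True by simp
    show ?thesis unfolding e
      by (rule good_muW[OF gp gq]) (insert WUntil.prems gp, unfold hok_def, blast+)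
  qed
qed (auto simp: good_single)


definition sdec :: "bool \<Rightarrow> 'a ltl \<Rightarrow> 'a cas list" where
  "sdec = gdec (\<lambda>q _. GF q) (\<lambda>p _. FG p)"

definition ddec :: "bool \<Rightarrow> 'a ltl \<Rightarrow> 'a cas list" where
  "ddec = gdec (\<lambda>_ \<psi>. nfG (sdec True \<psi>)) (\<lambda>_ \<psi>. nfF (sdec False \<psi>))"

lemma sdec_good: "good (sdec m \<phi>) \<phi>"
  unfolding sdec_def by (rule gdec_good) (auto simp: gok_def hok_def simp del: sat.simps)

lemma ddec_good: "good (ddec m \<phi>) \<phi>"
  unfolding ddec_def
proof (rule gdec_good)
  show "gok (\<lambda>_ \<psi>. nfG (sdec True \<psi>))"
    unfolding gok_def good_nfG[OF sdec_good] good_def by (meson evimp_GF)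
  show "hok (\<lambda>_ \<psi>. nfF (sdec False \<psi>))"
    unfolding hok_def good_nfF[OF sdec_good] good_def by (meson evimp_FG)
qed




definition wfree :: "'a ltl \<Rightarrow> bool" where "wfree \<phi> \<longleftrightarrow> (\<forall>p\<in>subfs \<phi>. \<not> is_wuntil p)"
definition ufree :: "'a ltl \<Rightarrow> bool" where "ufree \<phi> \<longleftrightarrow> (\<forall>p\<in>subfs \<phi>. \<not> is_until p)"

lemma subfs_self: "p \<in> subfs p" by (induction p) auto
lemma subfs_trans: "q \<in> subfs p \<Longrightarrow> subfs q \<subseteq> subfs p" by (induction p) auto
lemma psubfs_sub: "psubfs p \<subseteq> subfs p" by (cases p) auto

lemma nf_And: "normal_form a \<Longrightarrow> normal_form b \<Longrightarrow> normal_form (And a b)"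
  unfolding normal_form_def by auto
lemma nf_Or: "normal_form a \<Longrightarrow> normal_form b \<Longrightarrow> normal_form (Or a b)"
  unfolding normal_form_def by auto
lemma nf_LFalse: "normal_form LFalse"
  unfolding normal_form_def by auto

lemma sub_psub: "p \<in> subfs \<psi> \<Longrightarrow> q \<in> psubfs p \<Longrightarrow> q \<in> subfs \<psi>"
  using psubfs_sub subfs_trans by blast

lemma isGF_lim: "is_GF p \<Longrightarrow> is_limit p" by (cases p) auto
lemma isFG_lim: "is_FG p \<Longrightarrow> is_limit p" by (cases p) auto

lemma nf_GF: "limit_free \<psi> \<Longrightarrow> wfree \<psi> \<Longrightarrow> normal_form (GF \<psi>)"
  unfolding normal_form_def limit_free_def wfree_def
  apply (simp only: subfs.simps psubfs.simps ball_simps is_wuntil.simps is_temporal.simps is_GF.simps is_FG.simps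
     simp_thms insert_iff)
  apply (intro conjI ballI impI)
  by (meson sub_psub isGF_lim isFG_lim)+

lemma nf_FG: "limit_free \<psi> \<Longrightarrow> ufree \<psi> \<Longrightarrow> normal_form (FG \<psi>)"
  unfolding normal_form_def limit_free_def ufree_def
  apply (simp only: subfs.simps psubfs.simps ball_simps is_wuntil.simps is_temporal.simps is_GF.simps is_FG.simps
     simp_thms insert_iff)
  apply (intro conjI ballI impI)
  by (meson sub_psub isGF_lim isFG_lim)+

lemma nf_bigOr: "(\<forall>x\<in>set xs. normal_form x) \<Longrightarrow> normal_form (bigOr xs)"
  by (induction xs rule: bigOr.induct) (auto simp: nf_Or nf_LFalse)

lemma nf_foldr: "(\<forall>c\<in>set cs. normal_form c) \<Longrightarrow> normal_form x \<Longrightarrow> normal_form (foldr And cs x)"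
  by (induction cs) (auto simp: nf_And)

lemma nf_nfG: "(\<forall>d\<in>set D. (\<forall>c\<in>set (fst d). normal_form c) \<and> limit_free (snd d) \<and> wfree (snd d))
   \<Longrightarrow> normal_form (nfG D)"
  unfolding nfG_def mkGF_def by (auto intro!: nf_bigOr nf_foldr nf_GF)

lemma nf_nfF: "(\<forall>d\<in>set D. (\<forall>c\<in>set (fst d). normal_form c) \<and> limit_free (snd d) \<and> ufree (snd d))
   \<Longrightarrow> normal_form (nfF D)"
  unfolding nfF_def mkFG_def by (auto intro!: nf_bigOr nf_foldr nf_FG)


lemma lf_simps[simp]:
  "limit_free LTrue" "limit_free LFalse" "limit_free (Prop a)" "limit_free (NProp a)"
  "limit_free (Next p) = limit_free p"
  "limit_free (And p q) = (limit_free p \<and> limit_free q)"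
  "limit_free (Or p q) = (limit_free p \<and> limit_free q)"
  "limit_free (Until p q) = (limit_free p \<and> limit_free q)"
  "limit_free (WUntil p q) = (limit_free p \<and> limit_free q)"
  "\<not> limit_free (GF p)" "\<not> limit_free (FG p)"
  by (auto simp: limit_free_def)

lemma wf_simps[simp]:
  "wfree LTrue" "wfree LFalse" "wfree (Prop a)" "wfree (NProp a)"
  "wfree (Next p) = wfree p"
  "wfree (And p q) = (wfree p \<and> wfree q)"
  "wfree (Or p q) = (wfree p \<and> wfree q)"
  "wfree (Until p q) = (wfree p \<and> wfree q)"
  "\<not> wfree (WUntil p q)"
  by (auto simp: wfree_def)

lemma uf_simps[simp]:
  "ufree LTrue" "ufree LFalse" "ufree (Prop a)" "ufree (NProp a)"
  "ufree (Next p) = ufree p"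
  "ufree (And p q) = (ufree p \<and> ufree q)"
  "ufree (Or p q) = (ufree p \<and> ufree q)"
  "ufree (WUntil p q) = (ufree p \<and> ufree q)"
  "\<not> ufree (Until p q)"
  by (auto simp: ufree_def)

definition ST :: "'a cas \<Rightarrow> bool" where
  "ST d \<longleftrightarrow> (\<forall>c\<in>set (fst d). normal_form c) \<and> limit_free (snd d) \<and> wfree (snd d)"
definition SF :: "'a cas \<Rightarrow> bool" where
  "SF d \<longleftrightarrow> (\<forall>c\<in>set (fst d). normal_form c) \<and> limit_free (snd d) \<and> ufree (snd d)"

lemma gdec_shapeT:
  "limit_free \<phi> \<Longrightarrow> (\<And>p \<psi>. p \<in> subfs \<phi> \<Longrightarrow> limit_free \<psi> \<Longrightarrow> wfree \<psi> \<Longrightarrow> normal_form (h p \<psi>))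
   \<Longrightarrow> d \<in> set (gdec g h True \<phi>) \<Longrightarrow> ST d"
proof (induction \<phi> arbitrary: d)
  case (Next p)
  then obtain d' where m: "d' \<in> set (gdec g h True p)" "d = (fst d', Next (snd d'))" by auto
  have s1: "ST d'" by (rule Next.IH) (use Next.prems m in auto)
  show ?case unfolding m(2) using s1 unfolding ST_def by (simp add: ball_Un)
next
  case (And p q)
  then obtain d1 d2 where m: "d1 \<in> set (gdec g h True p)" "d2 \<in> set (gdec g h True q)"
    "d = (fst d1 @ fst d2, And (snd d1) (snd d2))" by (auto simp: set_prodc)
  have s1: "ST d1" by (rule And.IH(1)) (use And.prems m in auto)
  have s2: "ST d2" by (rule And.IH(2)) (use And.prems m in auto)
  show ?case unfolding m(3) using s1 s2 unfolding ST_def by (simp add: ball_Un)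
next
  case (Or p q)
  then obtain d1 d2 where m: "d1 \<in> set (gdec g h True p)" "d2 \<in> set (gdec g h True q)"
    "d = (fst d1 @ fst d2, Or (snd d1) (snd d2))" by (auto simp: set_prodc)
  have s1: "ST d1" by (rule Or.IH(1)) (use Or.prems m in auto)
  have s2: "ST d2" by (rule Or.IH(2)) (use Or.prems m in auto)
  show ?case unfolding m(3) using s1 s2 unfolding ST_def by (simp add: ball_Un)
next
  case (Until p q)
  then obtain d1 d2 where m: "d1 \<in> set (gdec g h True p)" "d2 \<in> set (gdec g h True q)"
    "d = (fst d1 @ fst d2, Until (snd d1) (snd d2))" by (auto simp: set_prodc)
  have s1: "ST d1" by (rule Until.IH(1)) (use Until.prems m in auto)
  have s2: "ST d2" by (rule Until.IH(2)) (use Until.prems m in auto)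
  show ?case unfolding m(3) using s1 s2 unfolding ST_def by (simp add: ball_Un)
next
  case (WUntil p q)
  from WUntil.prems(3) consider d1 d2 where "d1 \<in> set (gdec g h True p)" "d2 \<in> set (gdec g h True q)"
    "d = (fst d1 @ fst d2, Until (snd d1) (snd d2))"
    | d1 where "d1 \<in> set (gdec g h True p)" "d = (fst d1 @ [h p (snd d1)], LTrue)"
    by (auto simp: set_muW set_prodc)
  then show ?case
  proof cases
    case 1
    have s1: "ST d1" by (rule WUntil.IH(1)) (use WUntil.prems 1 in auto)
    have s2: "ST d2" by (rule WUntil.IH(2)) (use WUntil.prems 1 in auto)
    show ?thesis unfolding 1(3) using s1 s2 unfolding ST_def by (simp add: ball_Un)
  next
    case 2
    have s1: "ST d1" by (rule WUntil.IH(1)) (use WUntil.prems 2 in auto)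
    have n: "normal_form (h p (snd d1))"
      using WUntil.prems(2)[of p "snd d1"] s1 subfs_self by (auto simp: ST_def)
    show ?thesis unfolding 2(2) using s1 n unfolding ST_def by (simp add: ball_Un)
  qed
qed (auto simp: ST_def)

lemma gdec_shapeF:
  "limit_free \<phi> \<Longrightarrow> (\<And>q \<psi>. q \<in> subfs \<phi> \<Longrightarrow> limit_free \<psi> \<Longrightarrow> ufree \<psi> \<Longrightarrow> normal_form (g q \<psi>))
   \<Longrightarrow> d \<in> set (gdec g h False \<phi>) \<Longrightarrow> SF d"
proof (induction \<phi> arbitrary: d)
  case (Next p)
  then obtain d' where m: "d' \<in> set (gdec g h False p)" "d = (fst d', Next (snd d'))" by auto
  have s1: "SF d'" by (rule Next.IH) (use Next.prems m in auto)
  show ?case unfolding m(2) using s1 unfolding SF_def by (simp add: ball_Un)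
next
  case (And p q)
  then obtain d1 d2 where m: "d1 \<in> set (gdec g h False p)" "d2 \<in> set (gdec g h False q)"
    "d = (fst d1 @ fst d2, And (snd d1) (snd d2))" by (auto simp: set_prodc)
  have s1: "SF d1" by (rule And.IH(1)) (use And.prems m in auto)
  have s2: "SF d2" by (rule And.IH(2)) (use And.prems m in auto)
  show ?case unfolding m(3) using s1 s2 unfolding SF_def by (simp add: ball_Un)
next
  case (Or p q)
  then obtain d1 d2 where m: "d1 \<in> set (gdec g h False p)" "d2 \<in> set (gdec g h False q)"
    "d = (fst d1 @ fst d2, Or (snd d1) (snd d2))" by (auto simp: set_prodc)
  have s1: "SF d1" by (rule Or.IH(1)) (use Or.prems m in auto)
  have s2: "SF d2" by (rule Or.IH(2)) (use Or.prems m in auto)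
  show ?case unfolding m(3) using s1 s2 unfolding SF_def by (simp add: ball_Un)
next
  case (WUntil p q)
  then obtain d1 d2 where m: "d1 \<in> set (gdec g h False p)" "d2 \<in> set (gdec g h False q)"
    "d = (fst d1 @ fst d2, WUntil (snd d1) (snd d2))" by (auto simp: set_prodc)
  have s1: "SF d1" by (rule WUntil.IH(1)) (use WUntil.prems m in auto)
  have s2: "SF d2" by (rule WUntil.IH(2)) (use WUntil.prems m in auto)
  show ?case unfolding m(3) using s1 s2 unfolding SF_def by (simp add: ball_Un)
next
  case (Until p q)
  from Until.prems(3) consider "d = ([], LFalse)"
    | d1 d2 where "d1 \<in> set (gdec g h False p)" "d2 \<in> set (gdec g h False q)"
       "d = (fst d1 @ fst d2 @ [g q (snd d2)], WUntil (snd d1) (snd d2))"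
    by (auto simp: set_nuU)
  then show ?case
  proof cases
    case 1 then show ?thesis by (auto simp: SF_def)
  next
    case 2
    have s1: "SF d1" by (rule Until.IH(1)) (use Until.prems 2 in auto)
    have s2: "SF d2" by (rule Until.IH(2)) (use Until.prems 2 in auto)
    have n: "normal_form (g q (snd d2))"
      using Until.prems(2)[of q "snd d2"] s2 subfs_self by (auto simp: SF_def)
    show ?thesis unfolding 2(3) using s1 s2 n unfolding SF_def by (simp add: ball_Un)
  qed
qed (auto simp: SF_def)




fun tc :: "'a ltl \<Rightarrow> nat" where
  "tc (And p q) = tc p + tc q"
| "tc (Or p q) = tc p + tc q"
| "tc (Until p q) = tc p + tc q + 1"
| "tc (WUntil p q) = tc p + tc q + 1"
| "tc (Next p) = tc p"
| "tc (GF p) = tc p"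
| "tc (FG p) = tc p"
| "tc _ = 0"

lemma fsize_pos: "0 < fsize p" by (cases p) auto

lemma size_tc: "2 * tc \<phi> + 1 \<le> fsize \<phi>"
  by (induction \<phi>) auto

definition cs_size :: "'a ltl list \<Rightarrow> nat" where
  "cs_size cs = sum_list (map (\<lambda>c. fsize c + 1) cs)"

definition ccost :: "'a cas \<Rightarrow> nat" where
  "ccost d = cs_size (fst d) + fsize (snd d) + 1"

lemma cs_size_simps[simp]: "cs_size [] = 0" "cs_size (xs @ ys) = cs_size xs + cs_size ys"
  "cs_size (x # xs) = fsize x + 1 + cs_size xs"
  by (auto simp: cs_size_def)

lemma fsize_foldr: "fsize (foldr And cs x) = cs_size cs + fsize x"
  by (induction cs) auto

lemma fsize_mkGF: "fsize (mkGF d) = ccost d"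
  by (simp add: mkGF_def fsize_foldr ccost_def)
lemma fsize_mkFG: "fsize (mkFG d) = ccost d"
  by (simp add: mkFG_def fsize_foldr ccost_def)

lemma fsize_bigOr: "xs \<noteq> [] \<Longrightarrow> fsize (bigOr xs) + 1 = sum_list (map fsize xs) + length xs"
  by (induction xs rule: bigOr.induct) auto

lemma sum_list_bound: "(\<forall>x\<in>set xs. f x \<le> K) \<Longrightarrow> sum_list (map f xs) \<le> length xs * K"
  by (induction xs) auto

lemma fsize_nfG: "D \<noteq> [] \<Longrightarrow> (\<forall>d\<in>set D. ccost d \<le> K) \<Longrightarrow> length D \<le> L \<Longrightarrow> fsize (nfG D) + 1 \<le> L * (K + 1)"
proof -
  assume ne: "D \<noteq> []" and K: "\<forall>d\<in>set D. ccost d \<le> K" and L: "length D \<le> L"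
  have "fsize (nfG D) + 1 = sum_list (map ccost D) + length D"
  proof -
    have e: "fsize \<circ> mkGF = ccost" by (rule ext) (simp add: fsize_mkGF)
    show ?thesis using fsize_bigOr[of "map mkGF D"] ne by (simp add: nfG_def e)
  qed
  also have "\<dots> \<le> length D * K + length D" using sum_list_bound[OF K] by simp
  also have "\<dots> = length D * (K + 1)" by (simp add: algebra_simps)
  also have "\<dots> \<le> L * (K + 1)" by (rule mult_le_mono1[OF L])
  finally show ?thesis .
qed

lemma fsize_nfF: "D \<noteq> [] \<Longrightarrow> (\<forall>d\<in>set D. ccost d \<le> K) \<Longrightarrow> length D \<le> L \<Longrightarrow> fsize (nfF D) + 1 \<le> L * (K + 1)"
proof -
  assume ne: "D \<noteq> []" and K: "\<forall>d\<in>set D. ccost d \<le> K" and L: "length D \<le> L"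
  have "fsize (nfF D) + 1 = sum_list (map ccost D) + length D"
  proof -
    have e: "fsize \<circ> mkFG = ccost" by (rule ext) (simp add: fsize_mkFG)
    show ?thesis using fsize_bigOr[of "map mkFG D"] ne by (simp add: nfF_def e)
  qed
  also have "\<dots> \<le> length D * K + length D" using sum_list_bound[OF K] by simp
  also have "\<dots> = length D * (K + 1)" by (simp add: algebra_simps)
  also have "\<dots> \<le> L * (K + 1)" by (rule mult_le_mono1[OF L])
  finally show ?thesis .
qed

lemma prodc_ne: "D1 \<noteq> [] \<Longrightarrow> D2 \<noteq> [] \<Longrightarrow> prodc f D1 D2 \<noteq> []"
  by (metis length_0_conv length_prodc mult_is_0)
lemma nuU_ne: "nuU g D1 D2 \<noteq> []" by (simp add: nuU_def)
lemma muW_ne: "D1 \<noteq> [] \<Longrightarrow> D2 \<noteq> [] \<Longrightarrow> muW h D1 D2 \<noteq> []" by (simp add: muW_def prodc_ne)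

lemma gdec_ne: "gdec g h m \<phi> \<noteq> []"
  by (induction \<phi>) (auto simp: prodc_ne nuU_ne muW_ne)

lemma gdec_len: "length (gdec g h m \<phi>) \<le> 2 ^ tc \<phi>"
proof (induction \<phi>)
  case (And p q)
  then show ?case by (auto simp: length_prodc power_add intro: mult_le_mono)
next
  case (Or p q)
  then show ?case by (auto simp: length_prodc power_add intro: mult_le_mono)
next
  case (Until p q)
  let ?a = "length (gdec g h m p)" and ?b = "length (gdec g h m q)"
  have ab: "?a * ?b \<le> 2 ^ tc p * 2 ^ tc q" using Until by (auto intro: mult_le_mono)
  have one: "1 \<le> 2 ^ tc p * (2::nat) ^ tc q" by simp
  show ?case
  proof (cases m)
    case True
    have "length (gdec g h m (Until p q)) = ?a * ?b" using True by (simp add: length_prodc)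
    then show ?thesis using ab one by (simp add: power_add)
  next
    case False
    have "length (gdec g h m (Until p q)) = ?a * ?b + 1" using False by (simp add: length_nuU)
    moreover have "?a * ?b + 1 \<le> 2 * (2 ^ tc p * 2 ^ tc q)" using ab one by linarith
    ultimately show ?thesis by (simp add: power_add)
  qed
next
  case (WUntil p q)
  let ?a = "length (gdec g h m p)" and ?b = "length (gdec g h m q)"
  have ab: "?a * ?b \<le> 2 ^ tc p * 2 ^ tc q" using WUntil by (auto intro: mult_le_mono)
  have b1: "1 \<le> ?b" using gdec_ne[of g h m q] by (simp add: Suc_le_eq)
  have "?a \<le> ?a * ?b" using b1 by simp
  then have x: "?a * ?b + ?a \<le> 2 * (2 ^ tc p * 2 ^ tc q)" using ab by linarith
  show ?case
  proof (cases m)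
    case True
    have "length (gdec g h m (WUntil p q)) = ?a * ?b + ?a" using True by (simp add: length_muW)
    then show ?thesis using x by (simp add: power_add)
  next
    case False
    have "length (gdec g h m (WUntil p q)) = ?a * ?b" using False by (simp add: length_prodc)
    then show ?thesis using ab by (simp add: power_add)
  qed
qed auto

lemma gdec_snd: "d \<in> set (gdec g h m \<phi>) \<Longrightarrow> fsize (snd d) \<le> fsize \<phi> \<and> tc (snd d) \<le> tc \<phi>"
proof (induction \<phi> arbitrary: d)
  case (Until p q)
  then show ?case by (fastforce simp: set_prodc set_nuU split: if_splits)
next
  case (WUntil p q)
  then show ?case by (fastforce simp: set_prodc set_muW split: if_splits)
qed (fastforce simp: set_prodc)+




lemma ar_s0: "(c::nat) \<le> a^2+1 \<Longrightarrow> c + 1 \<le> (a+1)^2+1"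
  by (simp add: power2_eq_square algebra_simps)
lemma ar_s1: "(c1::nat) \<le> a^2+1 \<Longrightarrow> c2 \<le> b^2+1 \<Longrightarrow> c1 + c2 \<le> (a+b+1)^2+1"
  by (simp add: power2_eq_square algebra_simps)
lemma ar_s2: "(c1::nat) \<le> a^2+1 \<Longrightarrow> c2 \<le> b^2+1 \<Longrightarrow> 1 \<le> a \<Longrightarrow> c1 + c2 + (b+1) + 1 \<le> (a+b+1)^2+1"
  by (simp add: power2_eq_square algebra_simps)
lemma ar_s3: "(c1::nat) \<le> a^2+1 \<Longrightarrow> 1 \<le> b \<Longrightarrow> c1 + (a+1) + 1 \<le> (a+b+1)^2+1"
  by (simp add: power2_eq_square algebra_simps)

lemma le_XYZ1: "1 \<le> (Y::nat) \<Longrightarrow> X*Z \<le> X*Y*Z"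
proof -
  assume "1 \<le> Y"
  then have "X*Z*1 \<le> X*Z*Y" by (rule mult_le_mono2)
  then show ?thesis by (simp add: ac_simps)
qed
lemma le_XYZ2: "1 \<le> (X::nat) \<Longrightarrow> Y*Z \<le> X*Y*Z"
proof -
  assume "1 \<le> X"
  then have "Y*Z*1 \<le> Y*Z*X" by (rule mult_le_mono2)
  then show ?thesis by (simp add: ac_simps)
qed

lemma ar_d0: "(c::nat) \<le> X*(a^2+1) \<Longrightarrow> 1 \<le> X \<Longrightarrow> c + 1 \<le> X*((a+1)^2+1)"
  by (simp add: power2_eq_square algebra_simps)

lemma ar_d1: "(c1::nat) \<le> X*(a^2+1) \<Longrightarrow> c2 \<le> Y*(b^2+1) \<Longrightarrow> 1 \<le> X \<Longrightarrow> 1 \<le> Y \<Longrightarrow>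
  c1 + c2 \<le> X*Y*((a+b+1)^2+1)"
proof -
  assume h: "c1 \<le> X*(a^2+1)" "c2 \<le> Y*(b^2+1)" "1 \<le> X" "1 \<le> Y"
  have "X*(a^2+1) \<le> X*Y*(a^2+1)" using h by (intro le_XYZ1)
  moreover have "Y*(b^2+1) \<le> X*Y*(b^2+1)" using h by (intro le_XYZ2)
  moreover have "X*Y*(a^2+1) + X*Y*(b^2+1) \<le> X*Y*((a+b+1)^2+1)"
  proof -
    have "(a^2+1) + (b^2+1) \<le> (a+b+1)^2+1" by (simp add: power2_eq_square algebra_simps)
    then have "X*Y*((a^2+1) + (b^2+1)) \<le> X*Y*((a+b+1)^2+1)" by (rule mult_le_mono2)
    then show ?thesis by (simp add: algebra_simps)
  qed
  ultimately show ?thesis using h by linarith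
qed

lemma ar_d2: "(c1::nat) \<le> X*(a^2+1) \<Longrightarrow> c2 \<le> Y*(b^2+1) \<Longrightarrow> G + 1 \<le> Y*(b^2+2) \<Longrightarrow> 1 \<le> X \<Longrightarrow> 1 \<le> Y \<Longrightarrow>
  c1 + c2 + G + 1 \<le> 2*X*Y*((a+b+1)^2+1)"
proof -
  assume h: "c1 \<le> X*(a^2+1)" "c2 \<le> Y*(b^2+1)" "G + 1 \<le> Y*(b^2+2)" "1 \<le> X" "1 \<le> Y"
  have "X*(a^2+1) \<le> X*Y*(a^2+1)" using h by (intro le_XYZ1)
  moreover have "Y*(b^2+1) \<le> X*Y*(b^2+1)" using h by (intro le_XYZ2)
  moreover have "Y*(b^2+2) \<le> X*Y*(b^2+2)" using h by (intro le_XYZ2)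
  moreover have "X*Y*(a^2+1) + X*Y*(b^2+1) + X*Y*(b^2+2) \<le> 2*X*Y*((a+b+1)^2+1)"
  proof -
    have "(a^2+1) + (b^2+1) + (b^2+2) \<le> 2*((a+b+1)^2+1)" by (simp add: power2_eq_square algebra_simps)
    then have "X*Y*((a^2+1) + (b^2+1) + (b^2+2)) \<le> X*Y*(2*((a+b+1)^2+1))" by (rule mult_le_mono2)
    then show ?thesis by (simp add: algebra_simps)
  qed
  ultimately show ?thesis using h by linarith
qed

lemma ar_d3: "(c1::nat) \<le> X*(a^2+1) \<Longrightarrow> H + 1 \<le> X*(a^2+2) \<Longrightarrow> 1 \<le> X \<Longrightarrow> 1 \<le> Y \<Longrightarrow>
  c1 + H + 1 \<le> 2*X*Y*((a+b+1)^2+1)"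
proof -
  assume h: "c1 \<le> X*(a^2+1)" "H + 1 \<le> X*(a^2+2)" "1 \<le> X" "1 \<le> Y"
  have "X*(a^2+1) \<le> X*Y*(a^2+1)" using h by (intro le_XYZ1)
  moreover have "X*(a^2+2) \<le> X*Y*(a^2+2)" using h by (intro le_XYZ1)
  moreover have "X*Y*(a^2+1) + X*Y*(a^2+2) \<le> 2*X*Y*((a+b+1)^2+1)"
  proof -
    have "(a^2+1) + (a^2+2) \<le> 2*((a+b+1)^2+1)" by (simp add: power2_eq_square algebra_simps)
    then have "X*Y*((a^2+1) + (a^2+2)) \<le> X*Y*(2*((a+b+1)^2+1))" by (rule mult_le_mono2)
    then show ?thesis by (simp add: algebra_simps)
  qed
  ultimately show ?thesis using h by linarith
qed

lemma final_arith: "2 ^ k * ((k+1)^2 + 2) \<le> 3 ^ (k+1) * ((k::nat)+1)"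
proof (induction k)
  case 0 then show ?case by simp
next
  case (Suc k)
  let ?a = "(2::nat) ^ k" and ?b = "(3::nat) ^ (k+1)"
  have IH: "?a * (k^2+2*k+3) \<le> ?b * (k+1)" using Suc by (simp add: power2_eq_square algebra_simps)
  have poly: "2*(k^2+4*k+6)*(k+1) \<le> 3*(k+2)*(k^2+2*k+3)" by (simp add: power2_eq_square algebra_simps)
  have "2*?a*(k^2+4*k+6)*(k+1) = ?a * (2*(k^2+4*k+6)*(k+1))" by (simp add: algebra_simps)
  also have "\<dots> \<le> ?a * (3*(k+2)*(k^2+2*k+3))" using poly by (rule mult_le_mono2)
  also have "\<dots> = 3*(k+2) * (?a * (k^2+2*k+3))" by (simp add: algebra_simps)
  also have "\<dots> \<le> 3*(k+2) * (?b * (k+1))" using IH by (rule mult_le_mono2)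
  finally have "(2*?a*(k^2+4*k+6)) * (k+1) \<le> (3*(k+2)*?b) * (k+1)" by (simp add: algebra_simps)
  then have "2*?a*(k^2+4*k+6) \<le> 3*(k+2)*?b" by (subst (asm) mult_le_cancel2) simp
  then show ?case by (simp add: power2_eq_square algebra_simps)
qed




lemma ccost_Next: "ccost (fst d, Next (snd d)) = ccost d + 1" by (simp add: ccost_def)
lemma ccost_bin: "fsize (f (snd d1) (snd d2)) = fsize (snd d1) + fsize (snd d2) + 1 \<Longrightarrow>
   ccost (fst d1 @ fst d2, f (snd d1) (snd d2)) = ccost d1 + ccost d2" by (simp add: ccost_def)
lemma ccost_nu: "ccost (fst d1 @ fst d2 @ [G], WUntil (snd d1) (snd d2)) = ccost d1 + ccost d2 + fsize G + 1"
  by (simp add: ccost_def)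
lemma ccost_mu: "ccost (fst d1 @ [H], LTrue) \<le> ccost d1 + fsize H + 1"
  using fsize_pos[of "snd d1"] by (simp add: ccost_def)
lemma ccost_single: "ccost ([], p) = fsize p + 1" by (simp add: ccost_def)

lemma single_bound: "fsize p + 1 \<le> fsize p ^ 2 + 1"
  using fsize_pos[of p] by (simp add: power2_eq_square)

lemma sdec_cost: "d \<in> set (sdec m \<phi>) \<Longrightarrow> ccost d \<le> fsize \<phi> ^ 2 + 1"
  unfolding sdec_def
proof (induction \<phi> arbitrary: d)
  case (Next p)
  then obtain d' where m: "d' \<in> set (gdec (\<lambda>q _. GF q) (\<lambda>p _. FG p) m p)" "d = (fst d', Next (snd d'))" by auto
  show ?case unfolding m(2) ccost_Next using ar_s0[OF Next.IH[OF m(1)]] by simp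
next
  case (And p q)
  then obtain d1 d2 where m: "d1 \<in> set (gdec (\<lambda>q _. GF q) (\<lambda>p _. FG p) m p)" "d2 \<in> set (gdec (\<lambda>q _. GF q) (\<lambda>p _. FG p) m q)"
    "d = (fst d1 @ fst d2, And (snd d1) (snd d2))" by (auto simp: set_prodc)
  show ?case unfolding m(3) using ar_s1[OF And.IH(1)[OF m(1)] And.IH(2)[OF m(2)]] by (simp add: ccost_bin)
next
  case (Or p q)
  then obtain d1 d2 where m: "d1 \<in> set (gdec (\<lambda>q _. GF q) (\<lambda>p _. FG p) m p)" "d2 \<in> set (gdec (\<lambda>q _. GF q) (\<lambda>p _. FG p) m q)"
    "d = (fst d1 @ fst d2, Or (snd d1) (snd d2))" by (auto simp: set_prodc)
  show ?case unfolding m(3) using ar_s1[OF Or.IH(1)[OF m(1)] Or.IH(2)[OF m(2)]] by (simp add: ccost_bin)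
next
  case (Until p q)
  show ?case
  proof (cases m)
    case True
    then obtain d1 d2 where m: "d1 \<in> set (gdec (\<lambda>q _. GF q) (\<lambda>p _. FG p) m p)" "d2 \<in> set (gdec (\<lambda>q _. GF q) (\<lambda>p _. FG p) m q)"
      "d = (fst d1 @ fst d2, Until (snd d1) (snd d2))" using Until.prems by (auto simp: set_prodc)
    show ?thesis unfolding m(3) using ar_s1[OF Until.IH(1)[OF m(1)] Until.IH(2)[OF m(2)]] by (simp add: ccost_bin)
  next
    case False
    then have "d \<in> set (nuU (\<lambda>_. GF q) (gdec (\<lambda>q _. GF q) (\<lambda>p _. FG p) m p) (gdec (\<lambda>q _. GF q) (\<lambda>p _. FG p) m q))"
      using Until.prems by simp
    then consider "d = ([], LFalse)" | d1 d2 where "d1 \<in> set (gdec (\<lambda>q _. GF q) (\<lambda>p _. FG p) m p)"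
      "d2 \<in> set (gdec (\<lambda>q _. GF q) (\<lambda>p _. FG p) m q)"
      "d = (fst d1 @ fst d2 @ [GF q], WUntil (snd d1) (snd d2))" unfolding set_nuU by blast
    then show ?thesis
    proof cases
      case 1 then show ?thesis by (simp add: ccost_def)
    next
      case 2
      show ?thesis unfolding 2(3) ccost_nu
        using ar_s2[OF Until.IH(1)[OF 2(1)] Until.IH(2)[OF 2(2)], of ] fsize_pos[of p] by simp
    qed
  qed
next
  case (WUntil p q)
  show ?case
  proof (cases m)
    case False
    then obtain d1 d2 where m: "d1 \<in> set (gdec (\<lambda>q _. GF q) (\<lambda>p _. FG p) m p)" "d2 \<in> set (gdec (\<lambda>q _. GF q) (\<lambda>p _. FG p) m q)"
      "d = (fst d1 @ fst d2, WUntil (snd d1) (snd d2))" using WUntil.prems by (auto simp: set_prodc)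
    show ?thesis unfolding m(3) using ar_s1[OF WUntil.IH(1)[OF m(1)] WUntil.IH(2)[OF m(2)]] by (simp add: ccost_bin)
  next
    case True
    then have "d \<in> set (muW (\<lambda>_. FG p) (gdec (\<lambda>q _. GF q) (\<lambda>p _. FG p) m p) (gdec (\<lambda>q _. GF q) (\<lambda>p _. FG p) m q))"
      using WUntil.prems by simp
    then consider d1 d2 where "d1 \<in> set (gdec (\<lambda>q _. GF q) (\<lambda>p _. FG p) m p)"
      "d2 \<in> set (gdec (\<lambda>q _. GF q) (\<lambda>p _. FG p) m q)"
      "d = (fst d1 @ fst d2, Until (snd d1) (snd d2))"
      | d1 where "d1 \<in> set (gdec (\<lambda>q _. GF q) (\<lambda>p _. FG p) m p)" "d = (fst d1 @ [FG p], LTrue)"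
      unfolding set_muW set_prodc by blast
    then show ?thesis
    proof cases
      case 1
      show ?thesis unfolding 1(3) using ar_s1[OF WUntil.IH(1)[OF 1(1)] WUntil.IH(2)[OF 1(2)]] by (simp add: ccost_bin)
    next
      case 2
      have "ccost d \<le> ccost d1 + fsize (FG p) + 1" unfolding 2(2) by (rule ccost_mu)
      then show ?thesis using ar_s3[OF WUntil.IH(1)[OF 2(1)], of "fsize q"] fsize_pos[of q] by simp
    qed
  qed
qed (auto simp: ccost_single single_bound power2_eq_square)


lemma le_Xmul: "(Z::nat) \<le> W \<Longrightarrow> 1 \<le> X \<Longrightarrow> Z \<le> X * W"
  by (metis le_trans mult_1 mult_le_mono1)

lemma sdec_nf_size:
  "fsize (nfG (sdec True \<psi>)) + 1 \<le> 2 ^ tc \<psi> * (fsize \<psi> ^ 2 + 2)"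
  "fsize (nfF (sdec False \<psi>)) + 1 \<le> 2 ^ tc \<psi> * (fsize \<psi> ^ 2 + 2)"
proof -
  have ne: "sdec m \<psi> \<noteq> []" for m unfolding sdec_def by (rule gdec_ne)
  have len: "length (sdec m \<psi>) \<le> 2 ^ tc \<psi>" for m unfolding sdec_def by (rule gdec_len)
  have c: "\<forall>d\<in>set (sdec m \<psi>). ccost d \<le> fsize \<psi> ^ 2 + 1" for m using sdec_cost by blast
  show "fsize (nfG (sdec True \<psi>)) + 1 \<le> 2 ^ tc \<psi> * (fsize \<psi> ^ 2 + 2)"
    using fsize_nfG[OF ne c len] by simp
  show "fsize (nfF (sdec False \<psi>)) + 1 \<le> 2 ^ tc \<psi> * (fsize \<psi> ^ 2 + 2)"
    using fsize_nfF[OF ne c len] by simp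
qed

lemma mono_bound: "tc \<psi> \<le> t \<Longrightarrow> fsize \<psi> \<le> n \<Longrightarrow> (2::nat) ^ tc \<psi> * (fsize \<psi> ^ 2 + 2) \<le> 2 ^ t * (n ^ 2 + 2)"
  by (intro mult_le_mono power_increasing add_le_mono1 power_mono) auto

lemma gdec_cost:
  assumes hg: "\<And>q \<psi>. fsize \<psi> \<le> fsize q \<Longrightarrow> tc \<psi> \<le> tc q \<Longrightarrow> fsize (g q \<psi>) + 1 \<le> 2 ^ tc q * (fsize q ^ 2 + 2)"
    and hh: "\<And>p \<psi>. fsize \<psi> \<le> fsize p \<Longrightarrow> tc \<psi> \<le> tc p \<Longrightarrow> fsize (h p \<psi>) + 1 \<le> 2 ^ tc p * (fsize p ^ 2 + 2)"
  shows "d \<in> set (gdec g h m \<phi>) \<Longrightarrow> ccost d \<le> 2 ^ tc \<phi> * (fsize \<phi> ^ 2 + 1)"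
proof (induction \<phi> arbitrary: d)
  case (Next p)
  then obtain d' where m: "d' \<in> set (gdec g h m p)" "d = (fst d', Next (snd d'))" by auto
  show ?case unfolding m(2) ccost_Next using ar_d0[OF Next.IH[OF m(1)]] by simp
next
  case (And p q)
  then obtain d1 d2 where m: "d1 \<in> set (gdec g h m p)" "d2 \<in> set (gdec g h m q)"
    "d = (fst d1 @ fst d2, And (snd d1) (snd d2))" by (auto simp: set_prodc)
  show ?case unfolding m(3) using ar_d1[OF And.IH(1)[OF m(1)] And.IH(2)[OF m(2)]]
    by (simp add: ccost_bin power_add)
next
  case (Or p q)
  then obtain d1 d2 where m: "d1 \<in> set (gdec g h m p)" "d2 \<in> set (gdec g h m q)"
    "d = (fst d1 @ fst d2, Or (snd d1) (snd d2))" by (auto simp: set_prodc)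
  show ?case unfolding m(3) using ar_d1[OF Or.IH(1)[OF m(1)] Or.IH(2)[OF m(2)]]
    by (simp add: ccost_bin power_add)
next
  case (Until p q)
  let ?X = "(2::nat) ^ tc p" and ?Y = "(2::nat) ^ tc q" and ?n = "fsize p + fsize q + 1"
  have goal: "2 ^ tc (Until p q) * (fsize (Until p q) ^ 2 + 1) = 2 * ?X * ?Y * (?n ^ 2 + 1)"
    by (simp add: power_add)
  show ?case unfolding goal
  proof (cases m)
    case True
    then obtain d1 d2 where m: "d1 \<in> set (gdec g h m p)" "d2 \<in> set (gdec g h m q)"
      "d = (fst d1 @ fst d2, Until (snd d1) (snd d2))" using Until.prems by (auto simp: set_prodc)
    have "ccost d \<le> ?X * ?Y * (?n ^ 2 + 1)"
      unfolding m(3) using ar_d1[OF Until.IH(1)[OF m(1)] Until.IH(2)[OF m(2)]] by (simp add: ccost_bin)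
    then show "ccost d \<le> 2 * ?X * ?Y * (?n ^ 2 + 1)" by simp
  next
    case False
    then have "d \<in> set (nuU (g q) (gdec g h m p) (gdec g h m q))" using Until.prems by simp
    then consider "d = ([], LFalse)" | d1 d2 where "d1 \<in> set (gdec g h m p)" "d2 \<in> set (gdec g h m q)"
      "d = (fst d1 @ fst d2 @ [g q (snd d2)], WUntil (snd d1) (snd d2))" unfolding set_nuU by blast
    then show "ccost d \<le> 2 * ?X * ?Y * (?n ^ 2 + 1)"
    proof cases
      case 1
      have "0 < ?X * ?Y * (?n ^ 2 + 1)" by simp
      moreover have "2 * ?X * ?Y * (?n ^ 2 + 1) = 2 * (?X * ?Y * (?n ^ 2 + 1))" by (simp only: mult.assoc)
      moreover have "ccost d = 2" unfolding 1 by (simp add: ccost_def)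
      ultimately show ?thesis by linarith
    next
      case 2
      have s: "fsize (snd d2) \<le> fsize q" "tc (snd d2) \<le> tc q" using gdec_snd[OF 2(2)] by auto
      show ?thesis unfolding 2(3) ccost_nu
        using ar_d2[OF Until.IH(1)[OF 2(1)] Until.IH(2)[OF 2(2)] hg[OF s]] by simp
    qed
  qed
next
  case (WUntil p q)
  let ?X = "(2::nat) ^ tc p" and ?Y = "(2::nat) ^ tc q" and ?n = "fsize p + fsize q + 1"
  have goal: "2 ^ tc (WUntil p q) * (fsize (WUntil p q) ^ 2 + 1) = 2 * ?X * ?Y * (?n ^ 2 + 1)"
    by (simp add: power_add)
  show ?case unfolding goal
  proof (cases m)
    case False
    then obtain d1 d2 where m: "d1 \<in> set (gdec g h m p)" "d2 \<in> set (gdec g h m q)"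
      "d = (fst d1 @ fst d2, WUntil (snd d1) (snd d2))" using WUntil.prems by (auto simp: set_prodc)
    have "ccost d \<le> ?X * ?Y * (?n ^ 2 + 1)"
      unfolding m(3) using ar_d1[OF WUntil.IH(1)[OF m(1)] WUntil.IH(2)[OF m(2)]] by (simp add: ccost_bin)
    then show "ccost d \<le> 2 * ?X * ?Y * (?n ^ 2 + 1)" by simp
  next
    case True
    then have "d \<in> set (muW (h p) (gdec g h m p) (gdec g h m q))" using WUntil.prems by simp
    then consider d1 d2 where "d1 \<in> set (gdec g h m p)" "d2 \<in> set (gdec g h m q)"
      "d = (fst d1 @ fst d2, Until (snd d1) (snd d2))"
      | d1 where "d1 \<in> set (gdec g h m p)" "d = (fst d1 @ [h p (snd d1)], LTrue)"
      unfolding set_muW set_prodc by blast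
    then show "ccost d \<le> 2 * ?X * ?Y * (?n ^ 2 + 1)"
    proof cases
      case 1
      have "ccost d \<le> ?X * ?Y * (?n ^ 2 + 1)"
        unfolding 1(3) using ar_d1[OF WUntil.IH(1)[OF 1(1)] WUntil.IH(2)[OF 1(2)]] by (simp add: ccost_bin)
      then show ?thesis by simp
    next
      case 2
      have s: "fsize (snd d1) \<le> fsize p" "tc (snd d1) \<le> tc p" using gdec_snd[OF 2(1)] by auto
      have "ccost d \<le> ccost d1 + fsize (h p (snd d1)) + 1" unfolding 2(2) by (rule ccost_mu)
      also have "\<dots> \<le> 2 * ?X * ?Y * (?n ^ 2 + 1)"
        using ar_d3[OF WUntil.IH(1)[OF 2(1)] hh[OF s], of ?Y "fsize q"] by simp
      finally show ?thesis .
    qed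
  qed
next
  case (GF p)
  have b: "fsize (GF p) + 1 \<le> fsize (GF p) ^ 2 + 1" by (simp add: power2_eq_square)
  have c: "ccost d = fsize (GF p) + 1" using GF.prems by (simp add: ccost_single)
  show ?case unfolding c by (rule le_Xmul[OF b]) simp
next
  case (FG p)
  have b: "fsize (FG p) + 1 \<le> fsize (FG p) ^ 2 + 1" by (simp add: power2_eq_square)
  have c: "ccost d = fsize (FG p) + 1" using FG.prems by (simp add: ccost_single)
  show ?case unfolding c by (rule le_Xmul[OF b]) simp
qed (auto simp: ccost_single power2_eq_square intro!: le_Xmul)




lemma ddec_cost: "d \<in> set (ddec m \<phi>) \<Longrightarrow> ccost d \<le> 2 ^ tc \<phi> * (fsize \<phi> ^ 2 + 1)"
  unfolding ddec_def
proof (rule gdec_cost)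
  fix q :: "'a ltl" and \<psi> assume "fsize \<psi> \<le> fsize q" "tc \<psi> \<le> tc q"
  then show "fsize (nfG (sdec True \<psi>)) + 1 \<le> 2 ^ tc q * (fsize q ^ 2 + 2)"
    using sdec_nf_size(1)[of \<psi>] mono_bound by (meson le_trans)
next
  fix p :: "'a ltl" and \<psi> assume "fsize \<psi> \<le> fsize p" "tc \<psi> \<le> tc p"
  then show "fsize (nfF (sdec False \<psi>)) + 1 \<le> 2 ^ tc p * (fsize p ^ 2 + 2)"
    using sdec_nf_size(2)[of \<psi>] mono_bound by (meson le_trans)
qed

lemma sub_lf: "q \<in> subfs \<psi> \<Longrightarrow> limit_free \<psi> \<Longrightarrow> limit_free q"
  unfolding limit_free_def using subfs_trans by blast
lemma sub_wf: "q \<in> subfs \<psi> \<Longrightarrow> wfree \<psi> \<Longrightarrow> wfree q"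
  unfolding wfree_def using subfs_trans by blast
lemma sub_uf: "q \<in> subfs \<psi> \<Longrightarrow> ufree \<psi> \<Longrightarrow> ufree q"
  unfolding ufree_def using subfs_trans by blast

lemma nf_sdecT: "limit_free \<psi> \<Longrightarrow> ufree \<psi> \<Longrightarrow> normal_form (nfG (sdec True \<psi>))"
proof -
  assume lf: "limit_free \<psi>" and uf: "ufree \<psi>"
  have "ST d" if "d \<in> set (sdec True \<psi>)" for d
    using that unfolding sdec_def
    by (rule gdec_shapeT[OF lf, rotated]) (use lf uf sub_lf sub_uf nf_FG in blast)
  then show ?thesis by (intro nf_nfG) (auto simp: ST_def)
qed

lemma nf_sdecF: "limit_free \<psi> \<Longrightarrow> wfree \<psi> \<Longrightarrow> normal_form (nfF (sdec False \<psi>))"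
proof -
  assume lf: "limit_free \<psi>" and wf: "wfree \<psi>"
  have "SF d" if "d \<in> set (sdec False \<psi>)" for d
    using that unfolding sdec_def
    by (rule gdec_shapeF[OF lf, rotated]) (use lf wf sub_lf sub_wf nf_GF in blast)
  then show ?thesis by (intro nf_nfF) (auto simp: SF_def)
qed

lemma final_bound:
  assumes "2 * t + 1 \<le> (n::nat)"
  shows "2 ^ t * (2 ^ t * (n ^ 2 + 1) + 1) \<le> 3 ^ n * n + 1"
proof -
  define k where "k = n - 1"
  have k: "n = k + 1" using assms unfolding k_def by simp
  have tk: "2 * t \<le> k" using assms k by simp
  have AA: "(2::nat) ^ t * 2 ^ t \<le> 2 ^ k"
  proof -
    have "(2::nat) ^ t * 2 ^ t = 2 ^ (2 * t)" by (simp add: power_add[symmetric] mult_2)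
    also have "\<dots> \<le> 2 ^ k" using tk by (intro power_increasing) auto
    finally show ?thesis .
  qed
  have A: "(2::nat) ^ t \<le> 2 ^ k" using tk by (intro power_increasing) auto
  have "2 ^ t * (2 ^ t * (n ^ 2 + 1) + 1) = (2 ^ t * 2 ^ t) * (n ^ 2 + 1) + 2 ^ t"
    by (simp add: algebra_simps)
  also have "\<dots> \<le> 2 ^ k * (n ^ 2 + 1) + 2 ^ k"
    using AA A by (intro add_mono mult_le_mono1) auto
  also have "\<dots> = 2 ^ k * ((k + 1) ^ 2 + 2)" by (simp add: k algebra_simps)
  also have "\<dots> \<le> 3 ^ (k + 1) * (k + 1)" by (rule final_arith)
  finally show ?thesis using k by simp
qed

theorem proposition3:
  fixes \<phi> :: "'a ltl"
  assumes "limit_free \<phi>"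
  shows "(\<exists>\<psi>. normal_form \<psi> \<and> ltl_equiv \<psi> (GF \<phi>) \<and> fsize \<psi> \<le> 3 ^ fsize \<phi> * fsize \<phi>)
       \<and> (\<exists>\<psi>. normal_form \<psi> \<and> ltl_equiv \<psi> (FG \<phi>) \<and> fsize \<psi> \<le> 3 ^ fsize \<phi> * fsize \<phi>)"
proof
  have ne: "ddec m \<phi> \<noteq> []" for m unfolding ddec_def by (rule gdec_ne)
  have len: "length (ddec m \<phi>) \<le> 2 ^ tc \<phi>" for m unfolding ddec_def by (rule gdec_len)
  have c: "\<forall>d\<in>set (ddec m \<phi>). ccost d \<le> 2 ^ tc \<phi> * (fsize \<phi> ^ 2 + 1)" for m using ddec_cost by blast
  have fb: "2 ^ tc \<phi> * (2 ^ tc \<phi> * (fsize \<phi> ^ 2 + 1) + 1) \<le> 3 ^ fsize \<phi> * fsize \<phi> + 1"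
    by (rule final_bound[OF size_tc])
  show "\<exists>\<psi>. normal_form \<psi> \<and> ltl_equiv \<psi> (GF \<phi>) \<and> fsize \<psi> \<le> 3 ^ fsize \<phi> * fsize \<phi>"
  proof (intro exI conjI)
    show "normal_form (nfG (ddec True \<phi>))"
    proof (rule nf_nfG, intro ballI)
      fix d assume "d \<in> set (ddec True \<phi>)"
      then have "ST d" unfolding ddec_def
        by (rule gdec_shapeT[OF assms, rotated]) (use nf_sdecF in blast)
      then show "(\<forall>c\<in>set (fst d). normal_form c) \<and> limit_free (snd d) \<and> wfree (snd d)"
        by (simp add: ST_def)
    qed
    show "ltl_equiv (nfG (ddec True \<phi>)) (GF \<phi>)"
      unfolding ltl_equiv_def using good_nfG[OF ddec_good] by blast
    show "fsize (nfG (ddec True \<phi>)) \<le> 3 ^ fsize \<phi> * fsize \<phi>"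
      using fsize_nfG[OF ne[of True] c[of True] len[of True]] fb by linarith
  qed
  show "\<exists>\<psi>. normal_form \<psi> \<and> ltl_equiv \<psi> (FG \<phi>) \<and> fsize \<psi> \<le> 3 ^ fsize \<phi> * fsize \<phi>"
  proof (intro exI conjI)
    show "normal_form (nfF (ddec False \<phi>))"
    proof (rule nf_nfF, intro ballI)
      fix d assume "d \<in> set (ddec False \<phi>)"
      then have "SF d" unfolding ddec_def
        by (rule gdec_shapeF[OF assms, rotated]) (use nf_sdecT in blast)
      then show "(\<forall>c\<in>set (fst d). normal_form c) \<and> limit_free (snd d) \<and> ufree (snd d)"
        by (simp add: SF_def)
    qed
    show "ltl_equiv (nfF (ddec False \<phi>)) (FG \<phi>)"
      unfolding ltl_equiv_def using good_nfF[OF ddec_good] by blast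
    show "fsize (nfF (ddec False \<phi>)) \<le> 3 ^ fsize \<phi> * fsize \<phi>"
      using fsize_nfF[OF ne[of False] c[of False] len[of False]] fb by linarith
  qed
qed


end
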